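(* A number $t\in \frac{n+m}{2}+\mathbb Z$ is critical (i.e. $t\in\mathrm{Crit}$) if and only if $$|t-\kappa|<L+\tfrac12 \qquad (I)$$ and, in addition, in the exceptional case ($n\equiv m\equiv 1 \bmod 2$) $t$ satisfies the parity condition $$t-\kappa'\in (2\mathbb N-\epsilon)\cup -(2\mathbb N-1-\epsilon),$$ where $\epsilon\in\{0,1\}$, $\epsilon\equiv\delta+\delta' \bmod 2$, and $\mathbb N=\{1,2,3,\dots\}$.
   Context: Let $n,m\ge 1$ be integers, not both equal to $1$. For $N\ge1$ put $L_0^+(N):=\{(w,l)\in\mathbb Z\times\mathbb Z^N:\ l_1>l_2>\dots>l_N,\ l_i+l_{N+1-i}=0 \text{ for all } i,\ w+l_i\equiv N+1 \bmod 2 \text{ for all } i\}$. Fix $(w,l)\in L_0^+(n)$, $(w',l')\in L_0^+(m)$ and $\delta,\delta'\in\{0,1\}$ (the Langlands parameters of archimedean components $\pi_\infty\cong J(-w,l)\otimes \mathrm{sgn}^\delta$, $\sigma_\infty\cong J(-w',l')\otimes\mathrm{sgn}^{\delta'}$ of cohomological cuspidal representations of $GL_n$, $GL_m$ over $\mathbb Q$). Representations of the Weil group $W_{\mathbb R}$ (Knapp's notation): for an integer $l\ge1$ and $t\in\mathbb C$, $(l,t)$ is the irreducible 2-dimensional representation, and for $\epsilon\in\{0,1\}$, $(\mathrm{sgn}^\epsilon,t)$ is the 1-dimensional one; $(0,t):=(\mathrm{sgn}^0,t)\oplus(\mathrm{sgn}^1,t)$. Their $L$-factors are $L(s,(l,t))=\Gamma_{\mathbb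 C}(s+t+\frac l2)$, $L(s,(\mathrm{sgn}^\epsilon,t))=\Gamma_{\mathbb R}(s+t+\epsilon)$, multiplicative in direct sums, where $\Gamma_{\mathbb R}(s)=\pi^{-s/2}\Gamma(s/2)$, $\Gamma_{\mathbb C}(s)=2(2\pi)^{-s}\Gamma(s)$. The contragredient of $(l,t)$ is $(l,-t)$ and that of $(\mathrm{sgn}^\epsilon,t)$ is $(\mathrm{sgn}^\epsilon,-t)$. Put $\pi^W:=\bigoplus_{i=1}^{\lfloor n/2\rfloor}(l_i,-w/2)$, plus the summand $(\mathrm{sgn}^\delta,-w/2)$ if $n$ is odd; define $\sigma^W$ analogously from $(w',l',\delta',m)$; and $\tau:=\pi^W\otimes\sigma^W$. A number $t\in\frac{n+m}{2}+\mathbb Z$ is called critical if neither $s\mapsto L(s,\tau)$ nor $s\mapsto L(1-s,\check\tau)$ has a pole at $s=t$; $\mathrm{Crit}$ denotes the set of critical numbers. Put $\kappa:=\frac12(w+w'+1)$, $\kappa':=\kappa-\frac12$. The exceptional case is $n\equiv m\equiv1\bmod 2$. Let $L_0:=\min\{|l_i-l'_j|:1\le i\le n,1\le j\le m,\ i\ne\frac{n+1}{2}\text{ or } j\ne \frac{m+1}{2}\}$ and $L:=L_0/2$. *)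

theory Defs
  imports "HOL-Analysis.Analysis"
begin

definition has_pole_at :: "(complex \<Rightarrow> complex) \<Rightarrow> complex \<Rightarrow> bool" where
  "has_pole_at f a \<longleftrightarrow> filterlim f at_infinity (at a)"

definition GammaR :: "complex \<Rightarrow> complex" where
  "GammaR s = (of_real pi) powr (- s / 2) * Gamma (s / 2)"

definition GammaC :: "complex \<Rightarrow> complex" where
  "GammaC s = 2 * (2 * of_real pi) powr (- s) * Gamma s"

text \<open>Irreducible representations of the Weil group W_R (Knapp):
  WTwo l t = (l,t) (2-dimensional, l \<ge> 1), WOne e t = (sgn^e, t).
  A representation is a list (direct sum) of irreducibles.\<close>
datatype wrep = WTwo int complex | WOne nat complex

fun Lfac :: "wrep \<Rightarrow> complex \<Rightarrow> complex" where
  "Lfac (WTwo l t) s = GammaC (s + t + of_int l / 2)"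
| "Lfac (WOne e t) s = GammaR (s + t + of_nat e)"

definition Lfun :: "complex \<Rightarrow> wrep list \<Rightarrow> complex" where
  "Lfun s rs = prod_list (map (\<lambda>r. Lfac r s) rs)"

fun wcontra :: "wrep \<Rightarrow> wrep" where
  "wcontra (WTwo l t) = WTwo l (- t)"
| "wcontra (WOne e t) = WOne e (- t)"

definition contra :: "wrep list \<Rightarrow> wrep list" where
  "contra rs = map wcontra rs"

text \<open>(l,t) for l \<ge> 0, with the convention (0,t) = (sgn^0,t) + (sgn^1,t).\<close>
definition wtwo :: "int \<Rightarrow> complex \<Rightarrow> wrep list" where
  "wtwo l t = (if l = 0 then [WOne 0 t, WOne 1 t] else [WTwo l t])"

text \<open>Tensor products of irreducibles (Knapp's formulas).\<close>
fun wtens :: "wrep \<Rightarrow> wrep \<Rightarrow> wrep list" where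
  "wtens (WTwo l t) (WTwo l' t') = WTwo (l + l') (t + t') # wtwo \<bar>l - l'\<bar> (t + t')"
| "wtens (WTwo l t) (WOne e t') = [WTwo l (t + t')]"
| "wtens (WOne e t) (WTwo l t') = [WTwo l (t + t')]"
| "wtens (WOne e t) (WOne e' t') = [WOne ((e + e') mod 2) (t + t')]"

definition tens :: "wrep list \<Rightarrow> wrep list \<Rightarrow> wrep list" where
  "tens xs ys = concat (map (\<lambda>x. concat (map (\<lambda>y. wtens x y) ys)) xs)"

text \<open>(w,l) \<in> L_0^+(N); l is indexed by 1..N.\<close>
definition L0plus :: "nat \<Rightarrow> int \<Rightarrow> (nat \<Rightarrow> int) \<Rightarrow> bool" where
  "L0plus N w l \<longleftrightarrow>
     (\<forall>i j. 1 \<le> i \<longrightarrow> i < j \<longrightarrow> j \<le> N \<longrightarrow> l j < l i) \<and>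
     (\<forall>i. 1 \<le> i \<longrightarrow> i \<le> N \<longrightarrow> l i + l (N + 1 - i) = 0) \<and>
     (\<forall>i. 1 \<le> i \<longrightarrow> i \<le> N \<longrightarrow> (w + l i) mod 2 = (int N + 1) mod 2)"

definition piW :: "nat \<Rightarrow> int \<Rightarrow> (nat \<Rightarrow> int) \<Rightarrow> nat \<Rightarrow> wrep list" where
  "piW N w l d = map (\<lambda>i. WTwo (l i) (- of_int w / 2)) [1..<N div 2 + 1]
     @ (if odd N then [WOne d (- of_int w / 2)] else [])"

definition tauW :: "nat \<Rightarrow> int \<Rightarrow> (nat \<Rightarrow> int) \<Rightarrow> nat \<Rightarrow> nat \<Rightarrow> int \<Rightarrow> (nat \<Rightarrow> int) \<Rightarrow> nat \<Rightarrow> wrep list" where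
  "tauW n w l d m w' l' d' = tens (piW n w l d) (piW m w' l' d')"

definition critical :: "nat \<Rightarrow> int \<Rightarrow> (nat \<Rightarrow> int) \<Rightarrow> nat \<Rightarrow> nat \<Rightarrow> int \<Rightarrow> (nat \<Rightarrow> int) \<Rightarrow> nat \<Rightarrow> real \<Rightarrow> bool" where
  "critical n w l d m w' l' d' t \<longleftrightarrow>
     (\<exists>k::int. t = (real n + real m) / 2 + of_int k) \<and>
     \<not> has_pole_at (\<lambda>s. Lfun s (tauW n w l d m w' l' d')) (complex_of_real t) \<and>
     \<not> has_pole_at (\<lambda>s. Lfun (1 - s) (contra (tauW n w l d m w' l' d'))) (complex_of_real t)"

definition Lnought :: "nat \<Rightarrow> (nat \<Rightarrow> int) \<Rightarrow> nat \<Rightarrow> (nat \<Rightarrow> int) \<Rightarrow> int" where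
  "Lnought n l m l' = Min {\<bar>l i - l' j\<bar> | i j. 1 \<le> i \<and> i \<le> n \<and> 1 \<le> j \<and> j \<le> m \<and>
       (real i \<noteq> (real n + 1) / 2 \<or> real j \<noteq> (real m + 1) / 2)}"

end

theory Submission
  imports Defs
begin



lemma powr_eq_exp: "(c::complex) \<noteq> 0 \<Longrightarrow> c powr y = exp (y * ln c)"
  by (simp add: powr_def)

lemma gamma_pole:
  assumes "(z::complex) \<in> \<int>\<^sub>\<le>\<^sub>0"
  shows "filterlim Gamma at_infinity (at z)"
proof -
  have t: "(rGamma \<longlongrightarrow> 0) (at z)"
  proof -
    have "isCont rGamma z" by (intro continuous_intros)
    moreover have "rGamma z = 0" using assms by (simp add: rGamma_eq_zero_iff)
    ultimately show ?thesis by (simp add: isCont_def)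
  qed
  have ev0: "\<forall>x. x \<noteq> z \<and> dist x z < 1 \<longrightarrow> rGamma x \<noteq> 0"
  proof (intro allI impI)
    fix x assume x: "x \<noteq> z \<and> dist x z < 1"
    show "rGamma x \<noteq> 0"
    proof
      assume "rGamma x = 0"
      then have "x \<in> \<int>\<^sub>\<le>\<^sub>0" by (simp add: rGamma_eq_zero_iff)
      then obtain a where a: "x = of_int a" by (auto elim!: nonpos_Ints_cases)
      from assms obtain b where b: "z = of_int b" by (auto elim!: nonpos_Ints_cases)
      have "a \<noteq> b" using x a b by auto
      then have "1 \<le> \<bar>a - b\<bar>" by linarith
      also have "real_of_int \<bar>a - b\<bar> = dist x z" using a b
        by (simp add: dist_norm flip: of_int_diff)
      finally show False using x by simp
    qed
  qed
  have ev: "eventually (\<lambda>x. rGamma x \<noteq> 0) (at z)"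
    unfolding eventually_at using ev0 by (auto intro!: exI[of _ 1])
  have "filterlim rGamma (at 0) (at z)" using t ev by (simp add: filterlim_at)
  then have "filterlim (\<lambda>x. inverse (rGamma x)) at_infinity (at z)"
    using filterlim_inverse_at_iff[of "\<lambda>x. inverse (rGamma x)" "at z"] by simp
  then show ?thesis by (simp add: Gamma_def[abs_def])
qed

definition Gd :: "(complex \<Rightarrow> complex) \<Rightarrow> complex \<Rightarrow> bool" where
  "Gd f z \<longleftrightarrow> (\<exists>c. c \<noteq> 0 \<and> (f \<longlongrightarrow> c) (at z))"

lemma Gd_not_pole: "Gd f z \<Longrightarrow> \<not> has_pole_at f z"
  unfolding Gd_def has_pole_at_def
  using not_tendsto_and_filterlim_at_infinity[of "at z" f] by auto

lemma affine_factor: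
  fixes a b z :: complex and K :: "complex \<Rightarrow> complex"
  assumes a: "a \<noteq> 0" and K: "isCont K z" "K z \<noteq> 0"
    and f: "\<And>s. f s = K s * Gamma (a * s + b)"
  shows "(a * z + b \<in> \<int>\<^sub>\<le>\<^sub>0 \<longrightarrow> has_pole_at f z) \<and> (a * z + b \<notin> \<int>\<^sub>\<le>\<^sub>0 \<longrightarrow> Gd f z)"
proof (intro conjI impI)
  assume h: "a * z + b \<in> \<int>\<^sub>\<le>\<^sub>0"
  have "filterlim (\<lambda>s. a * s + b) (at (a * z + b)) (at z)"
    unfolding filterlim_at
  proof
    show "((\<lambda>s. a * s + b) \<longlongrightarrow> a * z + b) (at z)" by (intro tendsto_intros)
    show "\<forall>\<^sub>F s in at z. a * s + b \<in> UNIV \<and> a * s + b \<noteq> a * z + b"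
      unfolding eventually_at_filter using a by simp
  qed
  from filterlim_compose[OF gamma_pole[OF h] this]
  have "filterlim (\<lambda>s. Gamma (a * s + b)) at_infinity (at z)" .
  from tendsto_mult_filterlim_at_infinity[OF _ K(2) this] K(1)
  show "has_pole_at f z" unfolding has_pole_at_def f by (simp add: isCont_def)
next
  assume h: "a * z + b \<notin> \<int>\<^sub>\<le>\<^sub>0"
  have "isCont f z" unfolding f[abs_def]
    by (intro continuous_intros K h)
  moreover have "f z \<noteq> 0" using h K by (simp add: f Gamma_nonzero)
  ultimately show "Gd f z" unfolding Gd_def isCont_def by blast
qed

lemma cont_expfac: fixes g :: "complex \<Rightarrow> complex"
  assumes "isCont g z" shows "isCont (\<lambda>s. c * exp (g s)) z"
  by (rule isCont_mult[OF continuous_const isCont_exp'[OF assms]])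

lemma GammaC_aff:
  fixes a b z :: complex assumes a: "a \<noteq> 0"
  shows "(a * z + b \<in> \<int>\<^sub>\<le>\<^sub>0 \<longrightarrow> has_pole_at (\<lambda>s. GammaC (a * s + b)) z) \<and>
         (a * z + b \<notin> \<int>\<^sub>\<le>\<^sub>0 \<longrightarrow> Gd (\<lambda>s. GammaC (a * s + b)) z)"
proof (rule affine_factor[OF a])
  let ?K = "\<lambda>s. 2 * exp (- (a * s + b) * ln (2 * of_real pi))"
  show "isCont ?K z" by (rule cont_expfac) (intro continuous_intros)
  show "?K z \<noteq> 0" by simp
  fix s
  have "(2 * complex_of_real pi) \<noteq> 0" by simp
  then show "GammaC (a * s + b) = ?K s * Gamma (a * s + b)"
    unfolding GammaC_def by (simp add: powr_eq_exp)
qed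

lemma GammaR_aff:
  fixes a b z :: complex assumes a: "a \<noteq> 0"
  shows "((a * z + b) / 2 \<in> \<int>\<^sub>\<le>\<^sub>0 \<longrightarrow> has_pole_at (\<lambda>s. GammaR (a * s + b)) z) \<and>
         ((a * z + b) / 2 \<notin> \<int>\<^sub>\<le>\<^sub>0 \<longrightarrow> Gd (\<lambda>s. GammaR (a * s + b)) z)"
proof -
  have e: "(a * z + b) / 2 = (a/2) * z + b/2" by (simp add: field_simps)
  have "((a/2) * z + b/2 \<in> \<int>\<^sub>\<le>\<^sub>0 \<longrightarrow> has_pole_at (\<lambda>s. GammaR (a * s + b)) z) \<and>
         ((a/2) * z + b/2 \<notin> \<int>\<^sub>\<le>\<^sub>0 \<longrightarrow> Gd (\<lambda>s. GammaR (a * s + b)) z)"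
  proof (rule affine_factor)
    show "a/2 \<noteq> 0" using a by simp
    let ?K = "\<lambda>s. 1 * exp (- (a * s + b) / 2 * ln (of_real pi))"
    show "isCont ?K z" by (rule cont_expfac) (intro continuous_intros, simp)
    show "?K z \<noteq> 0" by simp
    fix s
    have "complex_of_real pi \<noteq> 0" by simp
    then show "GammaR (a * s + b) = ?K s * Gamma (a/2 * s + b/2)"
      unfolding GammaR_def by (simp add: powr_eq_exp add_divide_distrib)
  qed
  then show ?thesis by (simp only: e)
qed

lemma prod_pole:
  assumes "\<forall>r\<in>set rs. has_pole_at (F r) z \<or> Gd (F r) z"
  shows "(has_pole_at (\<lambda>s. prod_list (map (\<lambda>r. F r s) rs)) z \<longleftrightarrow> (\<exists>r\<in>set rs. has_pole_at (F r) z)) \<and>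
         (has_pole_at (\<lambda>s. prod_list (map (\<lambda>r. F r s) rs)) z \<or> Gd (\<lambda>s. prod_list (map (\<lambda>r. F r s) rs)) z)"
  using assms
proof (induction rs)
  case Nil
  have "Gd (\<lambda>s. 1) z" unfolding Gd_def by (auto intro!: exI[of _ 1])
  then show ?case using Gd_not_pole by auto
next
  case (Cons r rs)
  let ?P = "\<lambda>s. prod_list (map (\<lambda>r. F r s) rs)"
  have eq: "(\<lambda>s. prod_list (map (\<lambda>r. F r s) (r # rs))) = (\<lambda>s. F r s * ?P s)" by simp
  from Cons have IH: "(has_pole_at ?P z \<longleftrightarrow> (\<exists>r\<in>set rs. has_pole_at (F r) z))"
     "has_pole_at ?P z \<or> Gd ?P z" by auto
  have hr: "has_pole_at (F r) z \<or> Gd (F r) z" using Cons.prems by auto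
  show ?case unfolding eq
  proof (cases "has_pole_at (F r) z")
    case True
    have "has_pole_at (\<lambda>s. F r s * ?P s) z"
      using IH(2)
    proof
      assume "has_pole_at ?P z"
      then show ?thesis using True unfolding has_pole_at_def
        using filterlim_at_infinity_times[of "F r" "at z" ?P] by simp
    next
      assume "Gd ?P z"
      then obtain c where c: "c \<noteq> 0" "(?P \<longlongrightarrow> c) (at z)" unfolding Gd_def by auto
      from tendsto_mult_filterlim_at_infinity[OF c(2) c(1)] True
      show ?thesis unfolding has_pole_at_def by (simp add: mult.commute)
    qed
    then show "(has_pole_at (\<lambda>s. F r s * ?P s) z \<longleftrightarrow> (\<exists>r\<in>set (r # rs). has_pole_at (F r) z)) \<and>
         (has_pole_at (\<lambda>s. F r s * ?P s) z \<or> Gd (\<lambda>s. F r s * ?P s) z)" using True by auto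
  next
    case False
    then have "Gd (F r) z" using hr by auto
    then obtain c where c: "c \<noteq> 0" "(F r \<longlongrightarrow> c) (at z)" unfolding Gd_def by auto
    show "(has_pole_at (\<lambda>s. F r s * ?P s) z \<longleftrightarrow> (\<exists>r\<in>set (r # rs). has_pole_at (F r) z)) \<and>
         (has_pole_at (\<lambda>s. F r s * ?P s) z \<or> Gd (\<lambda>s. F r s * ?P s) z)"
      using IH(2)
    proof
      assume h: "has_pole_at ?P z"
      have "has_pole_at (\<lambda>s. F r s * ?P s) z"
        using tendsto_mult_filterlim_at_infinity[OF c(2) c(1)] h unfolding has_pole_at_def by simp
      then show ?thesis using h IH(1) by auto
    next
      assume "Gd ?P z"
      then obtain d where d: "d \<noteq> 0" "(?P \<longlongrightarrow> d) (at z)" unfolding Gd_def by auto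
      have "Gd (\<lambda>s. F r s * ?P s) z" unfolding Gd_def
        using tendsto_mult[OF c(2) d(2)] c(1) d(1) by (intro exI[of _ "c * d"]) auto
      moreover have "\<not> has_pole_at ?P z" using \<open>Gd ?P z\<close> Gd_not_pole by auto
      ultimately show ?thesis using False IH(1) Gd_not_pole by auto
    qed
  qed
qed

lemma fac_gen:
  assumes "\<And>s. F s = G (a * s + b)" and "a \<noteq> 0"
    and "(P \<longrightarrow> has_pole_at (\<lambda>s. G (a * s + b)) z) \<and> (\<not> P \<longrightarrow> Gd (\<lambda>s. G (a * s + b)) z)"
  shows "(has_pole_at F z \<longleftrightarrow> P) \<and> (has_pole_at F z \<or> Gd F z)"
proof -
  have "F = (\<lambda>s. G (a * s + b))" using assms(1) by auto
  then show ?thesis using assms(3) Gd_not_pole by auto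
qed

lemma pole_WTwo:
  "(has_pole_at (\<lambda>s. Lfac (WTwo l c) s) z \<longleftrightarrow> z + c + of_int l / 2 \<in> \<int>\<^sub>\<le>\<^sub>0) \<and>
   (has_pole_at (\<lambda>s. Lfac (WTwo l c) s) z \<or> Gd (\<lambda>s. Lfac (WTwo l c) s) z)"
  using fac_gen[where a=1 and b="c + of_int l / 2" and G=GammaC and F="\<lambda>s. Lfac (WTwo l c) s"
      and P="z + c + of_int l / 2 \<in> \<int>\<^sub>\<le>\<^sub>0" and z=z]
    GammaC_aff[of 1 z "c + of_int l / 2"]
  by (auto simp add: add.assoc)

lemma pole_WOne:
  "(has_pole_at (\<lambda>s. Lfac (WOne e c) s) z \<longleftrightarrow> (z + c + of_nat e) / 2 \<in> \<int>\<^sub>\<le>\<^sub>0) \<and>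
   (has_pole_at (\<lambda>s. Lfac (WOne e c) s) z \<or> Gd (\<lambda>s. Lfac (WOne e c) s) z)"
  using fac_gen[where a=1 and b="c + of_nat e" and G=GammaR and F="\<lambda>s. Lfac (WOne e c) s"
      and P="(z + c + of_nat e) / 2 \<in> \<int>\<^sub>\<le>\<^sub>0" and z=z]
    GammaR_aff[of 1 z "c + of_nat e"]
  by (auto simp add: add.assoc)

lemma poleR_WTwo:
  "(has_pole_at (\<lambda>s. Lfac (wcontra (WTwo l c)) (1 - s)) z \<longleftrightarrow> 1 - z - c + of_int l / 2 \<in> \<int>\<^sub>\<le>\<^sub>0) \<and>
   (has_pole_at (\<lambda>s. Lfac (wcontra (WTwo l c)) (1 - s)) z \<or> Gd (\<lambda>s. Lfac (wcontra (WTwo l c)) (1 - s)) z)"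
  using fac_gen[where a="-1" and b="1 - c + of_int l / 2" and G=GammaC and F="\<lambda>s. Lfac (wcontra (WTwo l c)) (1 - s)"
      and P="1 - z - c + of_int l / 2 \<in> \<int>\<^sub>\<le>\<^sub>0" and z=z]
    GammaC_aff[of "-1" z "1 - c + of_int l / 2"]
  by (auto simp add: algebra_simps)

lemma poleR_WOne:
  "(has_pole_at (\<lambda>s. Lfac (wcontra (WOne e c)) (1 - s)) z \<longleftrightarrow> (1 - z - c + of_nat e) / 2 \<in> \<int>\<^sub>\<le>\<^sub>0) \<and>
   (has_pole_at (\<lambda>s. Lfac (wcontra (WOne e c)) (1 - s)) z \<or> Gd (\<lambda>s. Lfac (wcontra (WOne e c)) (1 - s)) z)"
  using fac_gen[where a="-1" and b="1 - c + of_nat e" and G=GammaR and F="\<lambda>s. Lfac (wcontra (WOne e c)) (1 - s)"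
      and P="(1 - z - c + of_nat e) / 2 \<in> \<int>\<^sub>\<le>\<^sub>0" and z=z]
    GammaR_aff[of "-1" z "1 - c + of_nat e"]
  by (auto simp add: algebra_simps)

lemma Lfac_dich: "has_pole_at (\<lambda>s. Lfac r s) z \<or> Gd (\<lambda>s. Lfac r s) z"
  by (cases r) (use pole_WTwo pole_WOne in blast)+

lemma LfacR_dich: "has_pole_at (\<lambda>s. Lfac (wcontra r) (1 - s)) z \<or> Gd (\<lambda>s. Lfac (wcontra r) (1 - s)) z"
  by (cases r) (use poleR_WTwo poleR_WOne in blast)+

lemma Lfun_pole: "has_pole_at (\<lambda>s. Lfun s rs) z \<longleftrightarrow> (\<exists>r\<in>set rs. has_pole_at (\<lambda>s. Lfac r s) z)"
  using prod_pole[of rs "\<lambda>r s. Lfac r s" z] Lfac_dich unfolding Lfun_def by blast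

lemma LfunR_pole: "has_pole_at (\<lambda>s. Lfun (1 - s) (contra rs)) z \<longleftrightarrow>
   (\<exists>r\<in>set rs. has_pole_at (\<lambda>s. Lfac (wcontra r) (1 - s)) z)"
proof -
  have "(\<lambda>s. Lfun (1 - s) (contra rs)) = (\<lambda>s. prod_list (map (\<lambda>r. Lfac (wcontra r) (1 - s)) rs))"
    unfolding Lfun_def contra_def by (simp add: comp_def)
  then show ?thesis
    using prod_pole[of rs "\<lambda>r s. Lfac (wcontra r) (1 - s)" z] LfacR_dich by simp
qed




lemma int_nonpos_iff: "(of_int a :: real) \<in> \<int>\<^sub>\<le>\<^sub>0 \<longleftrightarrow> a \<le> 0"
  by (auto simp: nonpos_Ints_def)

lemma half_nonpos_iff: "(of_int a / 2 :: real) \<in> \<int>\<^sub>\<le>\<^sub>0 \<longleftrightarrow> a \<le> 0 \<and> even a"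
proof
  assume "(of_int a / 2 :: real) \<in> \<int>\<^sub>\<le>\<^sub>0"
  then obtain j where "j \<le> 0" "of_int a / 2 = (of_int j :: real)" by (auto simp: nonpos_Ints_def)
  then have "a = 2 * j" by linarith
  then show "a \<le> 0 \<and> even a" using \<open>j \<le> 0\<close> by auto
next
  assume "a \<le> 0 \<and> even a"
  then obtain j where "a = 2 * j" "j \<le> 0" by (auto elim!: evenE)
  then show "(of_int a / 2 :: real) \<in> \<int>\<^sub>\<le>\<^sub>0" by (auto simp: nonpos_Ints_def intro!: exI[of _ j])
qed

lemma two_ok:
  fixes u :: real and L q :: int
  assumes "u + of_int L / 2 = of_int q"
  shows "(u + of_int L / 2 \<notin> \<int>\<^sub>\<le>\<^sub>0 \<and> 1 - u + of_int L / 2 \<notin> \<int>\<^sub>\<le>\<^sub>0) \<longleftrightarrow>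
         \<bar>u - 1/2\<bar> < of_int L / 2 + 1/2"
proof -
  have e1: "1 - u + of_int L / 2 = of_int (1 - q + L)" using assms by simp
  have "\<bar>u - 1/2\<bar> < of_int L / 2 + 1/2 \<longleftrightarrow> 0 < real_of_int q \<and> real_of_int q < of_int L + 1"
    using assms by (auto simp: abs_less_iff)
  also have "\<dots> \<longleftrightarrow> 0 < q \<and> q < L + 1" by linarith
  finally show ?thesis unfolding e1 assms int_nonpos_iff by auto
qed

lemma zero_bad:
  fixes u :: real and q :: int
  assumes "u = of_int q"
  shows "(u + 0) / 2 \<in> \<int>\<^sub>\<le>\<^sub>0 \<or> (u + 1) / 2 \<in> \<int>\<^sub>\<le>\<^sub>0 \<or> (1 - u + 0) / 2 \<in> \<int>\<^sub>\<le>\<^sub>0 \<or> (1 - u + 1) / 2 \<in> \<int>\<^sub>\<le>\<^sub>0"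
proof -
  have "(u + 0) / 2 = of_int q / 2" "(u + 1) / 2 = of_int (q + 1) / 2"
    "(1 - u + 0) / 2 = of_int (1 - q) / 2" "(1 - u + 1) / 2 = of_int (2 - q) / 2"
    using assms by simp_all
  then show ?thesis apply (simp only: half_nonpos_iff) by presburger
qed

lemma one_ok:
  fixes u :: real and q :: int and e :: nat
  assumes "u = of_int q" "e \<le> 1"
  shows "((u + of_nat e) / 2 \<notin> \<int>\<^sub>\<le>\<^sub>0 \<and> (1 - u + of_nat e) / 2 \<notin> \<int>\<^sub>\<le>\<^sub>0) \<longleftrightarrow>
     ((\<exists>k::nat. k \<ge> 1 \<and> u = 2 * real k - real e) \<or> (\<exists>k::nat. k \<ge> 1 \<and> u = - (2 * real k - 1 - real e)))"
proof -
  have a: "(u + of_nat e) / 2 = of_int (q + int e) / 2" "(1 - u + of_nat e) / 2 = of_int (1 - q + int e) / 2"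
    using assms by simp_all
  have b: "(\<exists>k::nat. k \<ge> 1 \<and> u = 2 * real k - real e) \<longleftrightarrow> (\<exists>k::nat. k \<ge> 1 \<and> q = 2 * int k - int e)"
  proof -
    have "\<And>k. u = 2 * real k - real e \<longleftrightarrow> q = 2 * int k - int e"
    proof -
      fix k
      have "u = 2 * real k - real e \<longleftrightarrow> real_of_int q = real_of_int (2 * int k - int e)" using assms by simp
      then show "u = 2 * real k - real e \<longleftrightarrow> q = 2 * int k - int e" by linarith
    qed
    then show ?thesis by simp
  qed
  have c: "(\<exists>k::nat. k \<ge> 1 \<and> u = - (2 * real k - 1 - real e)) \<longleftrightarrow> (\<exists>k::nat. k \<ge> 1 \<and> q = - (2 * int k - 1 - int e))"
  proof -
    have "\<And>k. u = - (2 * real k - 1 - real e) \<longleftrightarrow> q = - (2 * int k - 1 - int e)"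
    proof -
      fix k
      have "u = - (2 * real k - 1 - real e) \<longleftrightarrow> real_of_int q = real_of_int (- (2 * int k - 1 - int e))" using assms by simp
      then show "u = - (2 * real k - 1 - real e) \<longleftrightarrow> q = - (2 * int k - 1 - int e)" by linarith
    qed
    then show ?thesis by simp
  qed
  have d: "e = 0 \<or> e = 1" using assms(2) by auto
  have "?thesis \<longleftrightarrow> (\<not> (q + int e \<le> 0 \<and> even (q + int e)) \<and> \<not> (1 - q + int e \<le> 0 \<and> even (1 - q + int e))
     \<longleftrightarrow> (\<exists>k::nat. k \<ge> 1 \<and> q = 2 * int k - int e) \<or> (\<exists>k::nat. k \<ge> 1 \<and> q = - (2 * int k - 1 - int e)))"
    by (simp only: a b c half_nonpos_iff)
  moreover have "\<not> (q + int e \<le> 0 \<and> even (q + int e)) \<and> \<not> (1 - q + int e \<le> 0 \<and> even (1 - q + int e))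
     \<longleftrightarrow> (\<exists>k::nat. k \<ge> 1 \<and> q = 2 * int k - int e) \<or> (\<exists>k::nat. k \<ge> 1 \<and> q = - (2 * int k - 1 - int e))"
    using d
  proof
    assume "e = 0" then show ?thesis apply simp by presburger
  next
    assume "e = 1" then show ?thesis apply simp by presburger
  qed
  ultimately show ?thesis by blast
qed




lemma set_piW: "set (piW N w l d) = (\<lambda>i. WTwo (l i) (- of_int w / 2)) ` {1..N div 2} \<union>
   (if odd N then {WOne d (- of_int w / 2)} else {})"
  by (auto simp: piW_def)

lemma set_tauW: "set (tauW n w l d m w' l' d') =
  (\<Union>x\<in>set (piW n w l d). \<Union>y\<in>set (piW m w' l' d'). set (wtens x y))"
  by (auto simp: tauW_def tens_def)

lemma L0_sym: "L0plus N w l \<Longrightarrow> 1 \<le> i \<Longrightarrow> i \<le> N \<Longrightarrow> l (N + 1 - i) = - l i"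
  unfolding L0plus_def by force

lemma L0_pos: assumes "L0plus N w l" "1 \<le> i" "i \<le> N div 2" shows "l i > 0"
proof -
  have o: "\<forall>i j. 1 \<le> i \<longrightarrow> i < j \<longrightarrow> j \<le> N \<longrightarrow> l j < l i" using assms(1) unfolding L0plus_def by blast
  have "i < N + 1 - i" "N + 1 - i \<le> N" using assms(2,3) by auto
  then have "l (N + 1 - i) < l i" using o assms(2) by blast
  then show ?thesis using L0_sym[OF assms(1,2)] assms by simp
qed

lemma L0_mid: assumes "L0plus N w l" "2 * i = N + 1" shows "l i = 0"
proof -
  have "N + 1 - i = i" using assms(2) by simp
  then show ?thesis using L0_sym[OF assms(1), of i] assms(2) by simp
qed

lemma L0_par: "L0plus N w l \<Longrightarrow> 1 \<le> i \<Longrightarrow> i \<le> N \<Longrightarrow> (w + l i) mod 2 = (int N + 1) mod 2"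
  unfolding L0plus_def by blast

lemma mid_iff: "real i = (real n + 1) / 2 \<longleftrightarrow> 2 * i = n + 1"
proof -
  have "real i = (real n + 1) / 2 \<longleftrightarrow> real (2 * i) = real (n + 1)" by auto
  then show ?thesis by (simp only: of_nat_eq_iff)
qed

lemma reduce_idx:
  assumes "L0plus N w l" "1 \<le> i" "i \<le> N"
  shows "\<exists>i'. 1 \<le> i' \<and> (i' \<le> N div 2 \<or> 2 * i' = N + 1) \<and> (2 * i' = N + 1 \<longleftrightarrow> 2 * i = N + 1)
     \<and> (l i = l i' \<or> l i = - l i')"
proof (cases "i \<le> N div 2 \<or> 2 * i = N + 1")
  case True then show ?thesis using assms by auto
next
  case False
  then show ?thesis using assms L0_sym[OF assms]
    by (intro exI[of _ "N + 1 - i"]) auto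
qed




context
  fixes n m :: nat and w w' :: int and l l' :: "nat \<Rightarrow> int" and \<delta> \<delta>' :: nat
  assumes Ln: "L0plus n w l" and Lm: "L0plus m w' l'"
begin

abbreviation "cc \<equiv> (- of_int w / 2 + - of_int w' / 2 :: complex)"
abbreviation "TT \<equiv> set (tauW n w l \<delta> m w' l' \<delta>')"
abbreviation "SS \<equiv> {\<bar>l i - l' j\<bar> | i j. 1 \<le> i \<and> i \<le> n \<and> 1 \<le> j \<and> j \<le> m \<and>
       (real i \<noteq> (real n + 1) / 2 \<or> real j \<noteq> (real m + 1) / 2)}"

lemma memS: "1 \<le> i \<Longrightarrow> i \<le> n \<Longrightarrow> 1 \<le> j \<Longrightarrow> j \<le> m \<Longrightarrow> \<not> (2 * i = n + 1 \<and> 2 * j = m + 1) \<Longrightarrow>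
  \<bar>l i - l' j\<bar> \<in> SS"
  unfolding mem_Collect_eq mid_iff by blast

lemma wt_sub: "x \<in> set (piW n w l \<delta>) \<Longrightarrow> y \<in> set (piW m w' l' \<delta>') \<Longrightarrow> set (wtens x y) \<subseteq> TT"
  by (auto simp: set_tauW)

lemma mem_ll: assumes "1 \<le> i" "i \<le> n div 2" "1 \<le> j" "j \<le> m div 2"
  shows "WTwo (l i + l' j) cc \<in> TT \<and> set (wtwo \<bar>l i - l' j\<bar> cc) \<subseteq> TT"
proof -
  have "set (wtens (WTwo (l i) (- of_int w / 2)) (WTwo (l' j) (- of_int w' / 2))) \<subseteq> TT"
    by (rule wt_sub) (use assms in \<open>auto simp: set_piW\<close>)
  then show ?thesis by simp
qed

lemma mem_lm: assumes "1 \<le> i" "i \<le> n div 2" "odd m"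
  shows "WTwo (l i) cc \<in> TT"
proof -
  have "set (wtens (WTwo (l i) (- of_int w / 2)) (WOne \<delta>' (- of_int w' / 2))) \<subseteq> TT"
    by (rule wt_sub) (use assms in \<open>auto simp: set_piW\<close>)
  then show ?thesis by simp
qed

lemma mem_ml: assumes "1 \<le> j" "j \<le> m div 2" "odd n"
  shows "WTwo (l' j) cc \<in> TT"
proof -
  have "set (wtens (WOne \<delta> (- of_int w / 2)) (WTwo (l' j) (- of_int w' / 2))) \<subseteq> TT"
    by (rule wt_sub) (use assms in \<open>auto simp: set_piW\<close>)
  then show ?thesis by simp
qed

lemma mem_mm: assumes "odd n" "odd m"
  shows "WOne ((\<delta> + \<delta>') mod 2) cc \<in> TT"
proof -
  have "set (wtens (WOne \<delta> (- of_int w / 2)) (WOne \<delta>' (- of_int w' / 2))) \<subseteq> TT"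
    by (rule wt_sub) (use assms in \<open>auto simp: set_piW\<close>)
  then show ?thesis by simp
qed

lemma piW_cases:
  assumes "x \<in> set (piW N v f d)"
  obtains i where "1 \<le> i" "i \<le> N div 2" "x = WTwo (f i) (- of_int v / 2)"
    | "odd N" "x = WOne d (- of_int v / 2)"
  using assms unfolding set_piW by (auto split: if_splits)

lemma tau_A: assumes "r \<in> TT"
  shows "(\<exists>L\<in>SS. L > 0 \<and> r = WTwo L cc) \<or> (0 \<in> SS \<and> (r = WOne 0 cc \<or> r = WOne 1 cc))
    \<or> (odd n \<and> odd m \<and> r = WOne ((\<delta> + \<delta>') mod 2) cc)"
proof -
  from assms obtain x y where x: "x \<in> set (piW n w l \<delta>)" and y: "y \<in> set (piW m w' l' \<delta>')"
    and r: "r \<in> set (wtens x y)" unfolding set_tauW by blast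
  show ?thesis
  proof (cases rule: piW_cases[OF x])
    case (1 i)
    note i = this
    have il: "0 < l i" using L0_pos[OF Ln i(1,2)] .
    show ?thesis
    proof (cases rule: piW_cases[OF y])
      case (1 j)
      note j = this
      have jl: "0 < l' j" using L0_pos[OF Lm j(1,2)] .
      have rr: "r = WTwo (l i + l' j) cc \<or> r \<in> set (wtwo \<bar>l i - l' j\<bar> cc)" using r i j by simp
      have S1: "\<bar>l i - l' (m + 1 - j)\<bar> \<in> SS" by (rule memS) (use i j in auto)
      have "l' (m + 1 - j) = - l' j" by (rule L0_sym[OF Lm]) (use j in auto)
      then have S1': "l i + l' j \<in> SS" using S1 il jl by simp
      have S2: "\<bar>l i - l' j\<bar> \<in> SS" by (rule memS) (use i j in auto)
      from rr show ?thesis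
      proof
        assume "r = WTwo (l i + l' j) cc" then show ?thesis using S1' il jl by auto
      next
        assume "r \<in> set (wtwo \<bar>l i - l' j\<bar> cc)"
        then show ?thesis using S2 unfolding wtwo_def by (auto split: if_splits)
      qed
    next
      case 2
      have rr: "r = WTwo (l i) cc" using r i 2 by simp
      have mid: "2 * ((m + 1) div 2) = m + 1" using 2 by presburger
      have S1: "\<bar>l i - l' ((m + 1) div 2)\<bar> \<in> SS" by (rule memS) (use i mid in auto)
      have "l' ((m + 1) div 2) = 0" by (rule L0_mid[OF Lm mid])
      then show ?thesis using S1 il rr by auto
    qed
  next
    case 2
    note nn = this
    show ?thesis
    proof (cases rule: piW_cases[OF y])
      case (1 j)
      note j = this
      have jl: "0 < l' j" using L0_pos[OF Lm j(1,2)] .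
      have rr: "r = WTwo (l' j) cc" using r nn j by simp
      have mid: "2 * ((n + 1) div 2) = n + 1" using nn by presburger
      have S1: "\<bar>l ((n + 1) div 2) - l' j\<bar> \<in> SS" by (rule memS) (use j mid in auto)
      have "l ((n + 1) div 2) = 0" by (rule L0_mid[OF Ln mid])
      then show ?thesis using S1 jl rr by auto
    next
      case 2
      then show ?thesis using r nn by simp
    qed
  qed
qed

lemma tau_B: assumes "L \<in> SS"
  shows "(L > 0 \<longrightarrow> WTwo L cc \<in> TT) \<and> (L = 0 \<longrightarrow> WOne 0 cc \<in> TT \<and> WOne 1 cc \<in> TT)"
proof -
  from assms obtain i j where L: "L = \<bar>l i - l' j\<bar>" and ij: "1 \<le> i" "i \<le> n" "1 \<le> j" "j \<le> m"
    and nm: "\<not> (2 * i = n + 1 \<and> 2 * j = m + 1)" unfolding mid_iff by blast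
  obtain i' where i': "1 \<le> i'" "i' \<le> n div 2 \<or> 2 * i' = n + 1" "2 * i' = n + 1 \<longleftrightarrow> 2 * i = n + 1"
    "l i = l i' \<or> l i = - l i'" using reduce_idx[OF Ln ij(1,2)] by blast
  obtain j' where j': "1 \<le> j'" "j' \<le> m div 2 \<or> 2 * j' = m + 1" "2 * j' = m + 1 \<longleftrightarrow> 2 * j = m + 1"
    "l' j = l' j' \<or> l' j = - l' j'" using reduce_idx[OF Lm ij(3,4)] by blast
  show ?thesis
  proof (cases "i' \<le> n div 2")
    case True
    have a: "0 < l i'" using L0_pos[OF Ln i'(1) True] .
    show ?thesis
    proof (cases "j' \<le> m div 2")
      case True2: True
      have b: "0 < l' j'" using L0_pos[OF Lm j'(1) True2] .
      have m: "WTwo (l i' + l' j') cc \<in> TT" "set (wtwo \<bar>l i' - l' j'\<bar> cc) \<subseteq> TT"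
        using mem_ll[OF i'(1) True j'(1) True2] by auto
      have "L = \<bar>l i' - l' j'\<bar> \<or> L = l i' + l' j'" using L i'(4) j'(4) a b by auto
      then show ?thesis
      proof
        assume "L = \<bar>l i' - l' j'\<bar>"
        then show ?thesis using m(2) unfolding wtwo_def by (auto split: if_splits)
      next
        assume "L = l i' + l' j'" then show ?thesis using m(1) a b by auto
      qed
    next
      case False
      then have mid: "2 * j' = m + 1" using j'(2) by auto
      then have "l' j' = 0" by (rule L0_mid[OF Lm])
      then have "L = l i'" using L i'(4) j'(4) a by auto
      moreover have "odd m" using mid by presburger
      ultimately show ?thesis using mem_lm[OF i'(1) True] a by auto
    qed
  next
    case False
    then have mid: "2 * i' = n + 1" using i'(2) by auto
    then have z: "l i' = 0" by (rule L0_mid[OF Ln])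
    have "\<not> 2 * j' = m + 1" using nm mid i'(3) j'(3) by auto
    then have True2: "j' \<le> m div 2" using j'(2) by auto
    have b: "0 < l' j'" using L0_pos[OF Lm j'(1) True2] .
    have "L = l' j'" using L i'(4) j'(4) z b by auto
    moreover have "odd n" using mid by presburger
    ultimately show ?thesis using mem_ml[OF j'(1) True2] b by auto
  qed
qed

end



lemma pL2: "c = complex_of_real cr \<Longrightarrow>
  has_pole_at (\<lambda>s. Lfac (WTwo L c) s) (complex_of_real t) \<longleftrightarrow> t + cr + of_int L / 2 \<in> \<int>\<^sub>\<le>\<^sub>0"
proof -
  assume c: "c = complex_of_real cr"
  have "complex_of_real t + c + of_int L / 2 = of_real (t + cr + of_int L / 2)" using c by simp
  moreover note pole_WTwo[of L c "complex_of_real t"]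
  ultimately show ?thesis by (simp only: of_real_in_nonpos_Ints_iff)
qed

lemma pR2: "c = complex_of_real cr \<Longrightarrow>
  has_pole_at (\<lambda>s. Lfac (wcontra (WTwo L c)) (1 - s)) (complex_of_real t) \<longleftrightarrow> 1 - (t + cr) + of_int L / 2 \<in> \<int>\<^sub>\<le>\<^sub>0"
proof -
  assume c: "c = complex_of_real cr"
  have "1 - complex_of_real t - c + of_int L / 2 = of_real (1 - (t + cr) + of_int L / 2)" using c by simp
  moreover note poleR_WTwo[of L c "complex_of_real t"]
  ultimately show ?thesis by (simp only: of_real_in_nonpos_Ints_iff)
qed

lemma pL1: "c = complex_of_real cr \<Longrightarrow>
  has_pole_at (\<lambda>s. Lfac (WOne e c) s) (complex_of_real t) \<longleftrightarrow> (t + cr + of_nat e) / 2 \<in> \<int>\<^sub>\<le>\<^sub>0"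
proof -
  assume c: "c = complex_of_real cr"
  have "(complex_of_real t + c + of_nat e) / 2 = of_real ((t + cr + of_nat e) / 2)" using c by simp
  moreover note pole_WOne[of e c "complex_of_real t"]
  ultimately show ?thesis by (simp only: of_real_in_nonpos_Ints_iff)
qed

lemma pR1: "c = complex_of_real cr \<Longrightarrow>
  has_pole_at (\<lambda>s. Lfac (wcontra (WOne e c)) (1 - s)) (complex_of_real t) \<longleftrightarrow> (1 - (t + cr) + of_nat e) / 2 \<in> \<int>\<^sub>\<le>\<^sub>0"
proof -
  assume c: "c = complex_of_real cr"
  have "(1 - complex_of_real t - c + of_nat e) / 2 = of_real ((1 - (t + cr) + of_nat e) / 2)" using c by simp
  moreover note poleR_WOne[of e c "complex_of_real t"]
  ultimately show ?thesis by (simp only: of_real_in_nonpos_Ints_iff)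
qed




context
  fixes n m :: nat and w w' :: int and l l' :: "nat \<Rightarrow> int" and \<delta> \<delta>' :: nat
  assumes Ln: "L0plus n w l" and Lm: "L0plus m w' l'"
begin

lemma SS_par: assumes "L \<in> SS n m l l'" shows "even (int n + int m - w - w' + L)"
proof -
  from assms obtain i j where L: "L = \<bar>l i - l' j\<bar>" and ij: "1 \<le> i" "i \<le> n" "1 \<le> j" "j \<le> m" by blast
  have p1: "(w + l i) mod 2 = (int n + 1) mod 2" by (rule L0_par[OF Ln ij(1,2)])
  have p2: "(w' + l' j) mod 2 = (int m + 1) mod 2" by (rule L0_par[OF Lm ij(3,4)])
  have "even (int n + int m - w - w' + (l i - l' j))" using p1 p2 by presburger
  moreover have "even (int n + int m - w - w' + (l' j - l i))" using p1 p2 by presburger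
  ultimately show ?thesis unfolding L by (cases "l i - l' j \<ge> 0") (auto simp: abs_if)
qed

lemma SS_fin: "finite (SS n m l l')"
proof (rule finite_subset)
  show "SS n m l l' \<subseteq> (\<lambda>(i, j). \<bar>l i - l' j\<bar>) ` ({1..n} \<times> {1..m})" by force
qed auto

lemma SS_ne: assumes "n \<ge> 1" "m \<ge> 1" "\<not> (n = 1 \<and> m = 1)" shows "SS n m l l' \<noteq> {}"
proof -
  have "\<bar>l 1 - l' 1\<bar> \<in> SS n m l l'"
    by (rule memS[OF Ln Lm]) (use assms in auto)
  then show ?thesis by blast
qed

lemma odd_w: assumes "odd n" shows "even w"
proof -
  have mid: "2 * ((n + 1) div 2) = n + 1" using assms by presburger
  have "l ((n + 1) div 2) = 0" by (rule L0_mid[OF Ln mid])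
  moreover have "(w + l ((n + 1) div 2)) mod 2 = (int n + 1) mod 2"
    by (rule L0_par[OF Ln]) (use mid in auto)
  ultimately show ?thesis using assms by presburger
qed

end




theorem proposition2p1:
  fixes n m :: nat and w w' :: int and l l' :: "nat \<Rightarrow> int" and \<delta> \<delta>' :: nat and t :: real
  assumes "n \<ge> 1" and "m \<ge> 1" and "\<not> (n = 1 \<and> m = 1)"
    and "L0plus n w l" and "L0plus m w' l'"
    and "\<delta> \<in> {0, 1}" and "\<delta>' \<in> {0, 1}"
    and "\<exists>k::int. t = (real n + real m) / 2 + of_int k"
  shows "critical n w l \<delta> m w' l' \<delta>' t \<longleftrightarrow>
    (let \<kappa> = (real_of_int w + real_of_int w' + 1) / 2;
         \<kappa>' = \<kappa> - 1 / 2;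
         L = real_of_int (Lnought n l m l') / 2;
         \<epsilon> = real ((\<delta> + \<delta>') mod 2)
     in \<bar>t - \<kappa>\<bar> < L + 1 / 2 \<and>
        (odd n \<and> odd m \<longrightarrow>
           ((\<exists>k::nat. k \<ge> 1 \<and> t - \<kappa>' = 2 * real k - \<epsilon>) \<or>
            (\<exists>k::nat. k \<ge> 1 \<and> t - \<kappa>' = - (2 * real k - 1 - \<epsilon>)))))"
proof -
  note Ln = assms(4) and Lm = assms(5)
  obtain k :: int where k: "t = (real n + real m) / 2 + of_int k" using assms(8) by blast
  define T where "T = tauW n w l \<delta> m w' l' \<delta>'"
  define S where "S = {\<bar>l i - l' j\<bar> | i j. 1 \<le> i \<and> i \<le> n \<and> 1 \<le> j \<and> j \<le> m \<and>
       (real i \<noteq> (real n + 1) / 2 \<or> real j \<noteq> (real m + 1) / 2)}"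
  define cr where "cr = - real_of_int w / 2 + - real_of_int w' / 2"
  define c :: complex where "c = - of_int w / 2 + - of_int w' / 2"
  have c: "c = complex_of_real cr" unfolding c_def cr_def by simp
  define u where "u = t + cr"
  define e where "e = (\<delta> + \<delta>') mod 2"
  define M where "M = Min S"
  have LM: "Lnought n l m l' = M" unfolding M_def S_def Lnought_def ..
  have finS: "finite S" unfolding S_def using SS_fin[OF Ln Lm] .
  have neS: "S \<noteq> {}" unfolding S_def using SS_ne[OF Ln Lm assms(1-3)] .
  have MS: "M \<in> S" unfolding M_def using finS neS by simp
  have Mle: "\<And>L. L \<in> S \<Longrightarrow> M \<le> L" unfolding M_def using finS by simp
  have Snn: "\<And>L. L \<in> S \<Longrightarrow> 0 \<le> L" unfolding S_def by auto
  have par: "\<And>L. L \<in> S \<Longrightarrow> \<exists>q. u + of_int L / 2 = of_int q"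
  proof -
    fix L assume "L \<in> S"
    then have ev: "even (int n + int m - w - w' + L)" using SS_par[OF Ln Lm] unfolding S_def by blast
    then obtain q where q: "int n + int m - w - w' + L = 2 * q" unfolding dvd_def by blast
    have "u + of_int L / 2 = of_int (int n + int m - w - w' + L) / 2 + of_int k"
      unfolding u_def cr_def k by (simp add: field_simps)
    also have "\<dots> = of_int (q + k)" unfolding q by simp
    finally show "\<exists>q. u + of_int L / 2 = of_int q" by blast
  qed
  define good where "good r \<longleftrightarrow> \<not> has_pole_at (\<lambda>s. Lfac r s) (complex_of_real t) \<and>
      \<not> has_pole_at (\<lambda>s. Lfac (wcontra r) (1 - s)) (complex_of_real t)" for r
  have crit: "critical n w l \<delta> m w' l' \<delta>' t \<longleftrightarrow> (\<forall>r\<in>set T. good r)"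
    unfolding critical_def good_def T_def tauW_def[symmetric] Lfun_pole LfunR_pole using assms(8) by blast
  have good2: "\<And>L. L \<in> S \<Longrightarrow> good (WTwo L c) \<longleftrightarrow> \<bar>u - 1/2\<bar> < of_int L / 2 + 1/2"
  proof -
    fix L assume L: "L \<in> S"
    obtain q where q: "u + of_int L / 2 = of_int q" using par[OF L] by blast
    show "good (WTwo L c) \<longleftrightarrow> \<bar>u - 1/2\<bar> < of_int L / 2 + 1/2"
      unfolding good_def pL2[OF c] pR2[OF c] u_def[symmetric] using two_ok[OF q] .
  qed
  have good1: "\<And>e'. good (WOne e' c) \<longleftrightarrow>
     (u + of_nat e') / 2 \<notin> \<int>\<^sub>\<le>\<^sub>0 \<and> (1 - u + of_nat e') / 2 \<notin> \<int>\<^sub>\<le>\<^sub>0"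
    unfolding good_def pL1[OF c] pR1[OF c] u_def by simp
  have tk: "t - (real_of_int w + real_of_int w' + 1) / 2 = u - 1/2" unfolding u_def cr_def by (simp add: field_simps)
  have tk': "t - ((real_of_int w + real_of_int w' + 1) / 2 - 1/2) = u" unfolding u_def cr_def by (simp add: field_simps)
  have uint: "odd n \<Longrightarrow> odd m \<Longrightarrow> \<exists>q. u = of_int q"
  proof -
    assume "odd n" "odd m"
    then have "even w" "even w'" using odd_w[OF Ln Lm] odd_w[OF Lm Ln] by auto
    with \<open>odd n\<close> \<open>odd m\<close> have "even (int n + int m - w - w')" by presburger
    then obtain q where q: "int n + int m - w - w' = 2 * q" unfolding dvd_def by blast
    have "u = of_int (int n + int m - w - w') / 2 + of_int k"
      unfolding u_def cr_def k by (simp add: field_simps)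
    also have "\<dots> = of_int (q + k)" unfolding q by simp
    finally show ?thesis by blast
  qed
  have e1: "e \<le> 1" unfolding e_def by simp
  have Tc: "set T = set (tauW n w l \<delta> m w' l' \<delta>')" unfolding T_def ..
  show ?thesis
    unfolding Let_def LM crit tk tk' e_def[symmetric]
  proof
    assume all: "\<forall>r\<in>set T. good r"
    have M0: "M \<noteq> 0"
    proof
      assume "M = 0"
      then have "WOne 0 c \<in> set T \<and> WOne 1 c \<in> set T"
        using tau_B[OF Ln Lm MS[unfolded S_def]] unfolding T_def c_def by auto
      then have "good (WOne 0 c)" "good (WOne 1 c)" using all by auto
      moreover obtain q where "u + of_int 0 / 2 = of_int q" using par[OF MS] \<open>M = 0\<close> by blast
      ultimately show False using zero_bad[of u q] unfolding good1 by auto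
    qed
    then have "M > 0" using Snn[OF MS] by auto
    then have "WTwo M c \<in> set T"
      using tau_B[OF Ln Lm MS[unfolded S_def]] unfolding T_def c_def by auto
    then have I: "\<bar>u - 1/2\<bar> < of_int M / 2 + 1/2" using all good2[OF MS] by auto
    have II: "odd n \<and> odd m \<longrightarrow> ((\<exists>k::nat. k \<ge> 1 \<and> u = 2 * real k - real e) \<or>
            (\<exists>k::nat. k \<ge> 1 \<and> u = - (2 * real k - 1 - real e)))"
    proof
      assume o: "odd n \<and> odd m"
      then have "WOne e c \<in> set T" using mem_mm[OF Ln Lm] unfolding T_def c_def e_def by auto
      then have "good (WOne e c)" using all by auto
      moreover obtain q where "u = of_int q" using uint o by blast
      ultimately show "(\<exists>k::nat. k \<ge> 1 \<and> u = 2 * real k - real e) \<or>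
            (\<exists>k::nat. k \<ge> 1 \<and> u = - (2 * real k - 1 - real e))"
        using one_ok[of u q e] e1 unfolding good1 by blast
    qed
    show "\<bar>u - 1/2\<bar> < real_of_int M / 2 + 1/2 \<and> (odd n \<and> odd m \<longrightarrow> ((\<exists>k::nat. k \<ge> 1 \<and> u = 2 * real k - real e) \<or>
            (\<exists>k::nat. k \<ge> 1 \<and> u = - (2 * real k - 1 - real e))))" using I II by blast
  next
    assume h: "\<bar>u - 1/2\<bar> < real_of_int M / 2 + 1/2 \<and> (odd n \<and> odd m \<longrightarrow> ((\<exists>k::nat. k \<ge> 1 \<and> u = 2 * real k - real e) \<or>
            (\<exists>k::nat. k \<ge> 1 \<and> u = - (2 * real k - 1 - real e))))"
    show "\<forall>r\<in>set T. good r"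
    proof
      fix r assume r: "r \<in> set T"
      have "(\<exists>L\<in>S. L > 0 \<and> r = WTwo L c) \<or> (0 \<in> S \<and> (r = WOne 0 c \<or> r = WOne 1 c))
         \<or> (odd n \<and> odd m \<and> r = WOne e c)"
        using tau_A[OF Ln Lm r[unfolded T_def]] unfolding S_def c_def e_def .
      then show "good r"
      proof (elim disjE)
        assume "\<exists>L\<in>S. L > 0 \<and> r = WTwo L c"
        then obtain L where L: "L \<in> S" "r = WTwo L c" by blast
        have "M \<le> L" using Mle[OF L(1)] .
        then show "good r" using h good2[OF L(1)] L(2) by auto
      next
        assume z: "0 \<in> S \<and> (r = WOne 0 c \<or> r = WOne 1 c)"
        then have "M \<le> 0" using Mle by auto
        then have "M = 0" using Snn[OF MS] by auto
        obtain q where q: "u + of_int 0 / 2 = of_int q" using par z by blast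
        have "\<bar>real_of_int q - 1/2\<bar> < 1/2" using h q \<open>M = 0\<close> by simp
        then have "real_of_int q - 1/2 < 1/2 \<and> - (real_of_int q - 1/2) < 1/2" by (simp only: abs_less_iff)
        then have "real_of_int 0 < real_of_int q \<and> real_of_int q < real_of_int 1" by simp
        then have "0 < q \<and> q < 1" by (simp only: of_int_less_iff)
        then show "good r" by arith
      next
        assume o: "odd n \<and> odd m \<and> r = WOne e c"
        obtain q where "u = of_int q" using uint o by blast
        then show "good r" using one_ok[of u q e] e1 h o good1[of e] by auto
      qed
    qed
  qed
qed



end
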